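(* Let $\mathbf A$ be a Mal'cev algebra, $n\ge1$, $\alpha_0,\dots,\alpha_{n-1}$ congruences of $\mathbf A$, and $a,b\in A$. The following are equivalent: (1) $(a,b)\in\psi_{2^n-1}(\Delta(\alpha_0,\dots,\alpha_{n-1}))$; (2) the $2^n$-tuple $(a,\dots,a,b)$ (all coordinates $a$ except the last, which is $b$) belongs to $\Delta(\alpha_0,\dots,\alpha_{n-1})$; (3) there exist $c_0,\dots,c_{2^{n-1}-2}\in A$ such that $(c_0,\dots,c_{2^{n-1}-2},a,c_0,\dots,c_{2^{n-1}-2},b)\in\Delta(\alpha_0,\dots,\alpha_{n-1})$; (4) $(a,b)\in[\alpha_0,\dots,\alpha_{n-1}]$.
   Context: A Mal'cev algebra is an algebra with a ternary term operation $q$ satisfying $q(x,x,y)=y=q(y,x,x)$. Higher commutator (Bulatov): for congruences $\alpha_0,\dots,\alpha_{n-1},\gamma$, say $\alpha_0,\dots,\alpha_{n-2}$ centralize $\alpha_{n-1}$ modulo $\gamma$ if for all tuples $\mathbf a_i,\mathbf b_i$ ($i<n$, with $\mathbf a_i\neq\mathbf b_i$ congruent modulo $\alpha_i$ coordinatewise) and every term operation $t$ such that $t(\mathbf x_0,\dots,\mathbf x_{n-2},\mathbf a_{n-1})\equiv_\gamma t(\mathbf x_0,\dots,\mathbf x_{n-2},\mathbf b_{n-1})$ for all $(\mathbf x_0,\dots,\mathbf x_{n-2})\in(\{\mathbf a_0,\mathbf b_0\}\times\dots\times\{\mathbf a_{n-2},\mathbf b_{n-2}\})\setminus\{(\mathbf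 b_0,\dots,\mathbf b_{n-2})\}$, we have $t(\mathbf b_0,\dots,\mathbf b_{n-2},\mathbf a_{n-1})\equiv_\gamma t(\mathbf b_0,\dots,\mathbf b_{n-2},\mathbf b_{n-1})$. $[\alpha_0,\dots,\alpha_{n-1}]$ is the smallest congruence $\gamma$ such that $\alpha_0,\dots,\alpha_{n-2}$ centralize $\alpha_{n-1}$ modulo $\gamma$. Tuples in $A^m$ are indexed by $0,\dots,m-1$; $k_{(i)}$ is the $i$-th binary digit of $k$ (least significant is $i=0$). For $a,b\in A$ and $i<n$, $\mathbf c_i^n(a,b)\in A^{2^n}$ has $k$-th coordinate $a$ if $k_{(i)}=0$ and $b$ if $k_{(i)}=1$. $\Delta(\alpha_0,\dots,\alpha_{n-1})$ is the subuniverse of $\mathbf A^{2^n}$ generated by $\{\mathbf c_i^n(a,b): i<n,\ (a,b)\in\alpha_i\}$. Forks: for $R\subseteq A^m$ and $i<m$, $\psi_i(R)$ is the set of pairs $(a,b)$ for which there exist $\mathbf c,\mathbf d\in R$ with $c_i=a$, $d_i=b$, and $c_k=d_k$ for all $k\neq i$. *)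

theory Defs
  imports Main
begin

definition is_algebra :: "'a set \<Rightarrow> ('f \<Rightarrow> nat) \<Rightarrow> ('f \<Rightarrow> 'a list \<Rightarrow> 'a) \<Rightarrow> bool" where
  "is_algebra A ar ops \<longleftrightarrow> A \<noteq> {} \<and>
     (\<forall>f xs. length xs = ar f \<and> set xs \<subseteq> A \<longrightarrow> ops f xs \<in> A)"

inductive_set clo :: "('f \<Rightarrow> nat) \<Rightarrow> ('f \<Rightarrow> 'a list \<Rightarrow> 'a) \<Rightarrow> nat \<Rightarrow> ('a list \<Rightarrow> 'a) set"
  for ar ops k where
  proj: "i < k \<Longrightarrow> (\<lambda>xs. xs ! i) \<in> clo ar ops k"
| app: "(\<And>j. j < ar f \<Longrightarrow> ts j \<in> clo ar ops k) \<Longrightarrow>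
        (\<lambda>xs. ops f (map (\<lambda>j. ts j xs) [0..<ar f])) \<in> clo ar ops k"

definition malcev :: "'a set \<Rightarrow> ('f \<Rightarrow> nat) \<Rightarrow> ('f \<Rightarrow> 'a list \<Rightarrow> 'a) \<Rightarrow> bool" where
  "malcev A ar ops \<longleftrightarrow> is_algebra A ar ops \<and>
     (\<exists>q\<in>clo ar ops 3. \<forall>x\<in>A. \<forall>y\<in>A. q [x, x, y] = y \<and> q [y, x, x] = y)"

definition congruence :: "'a set \<Rightarrow> ('f \<Rightarrow> nat) \<Rightarrow> ('f \<Rightarrow> 'a list \<Rightarrow> 'a) \<Rightarrow> 'a rel \<Rightarrow> bool" where
  "congruence A ar ops \<theta> \<longleftrightarrow> equiv A \<theta> \<and>
     (\<forall>f xs ys. length xs = ar f \<and> length ys = ar f \<and> (\<forall>i<ar f. (xs ! i, ys ! i) \<in> \<theta>)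
        \<longrightarrow> (ops f xs, ops f ys) \<in> \<theta>)"

definition comm_args :: "nat \<Rightarrow> (nat \<Rightarrow> 'a list) \<Rightarrow> (nat \<Rightarrow> 'a list) \<Rightarrow> (nat \<Rightarrow> bool) \<Rightarrow> 'a list \<Rightarrow> 'a list" where
  "comm_args n as bs s lst =
     concat (map (\<lambda>i. if i < n - 1 then (if s i then bs i else as i) else lst) [0..<n])"

text \<open>alpha_0,...,alpha_{n-2} centralize alpha_{n-1} modulo gamma (Bulatov).\<close>
definition centralizes :: "'a set \<Rightarrow> ('f \<Rightarrow> nat) \<Rightarrow> ('f \<Rightarrow> 'a list \<Rightarrow> 'a) \<Rightarrow> nat \<Rightarrow> (nat \<Rightarrow> 'a rel) \<Rightarrow> 'a rel \<Rightarrow> bool" where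
  "centralizes A ar ops n \<alpha> \<gamma> \<longleftrightarrow>
    (\<forall>ms as bs t.
       (\<forall>i<n. length (as i) = ms i \<and> length (bs i) = ms i \<and> as i \<noteq> bs i \<and>
              set (as i) \<subseteq> A \<and> set (bs i) \<subseteq> A \<and>
              (\<forall>k<ms i. (as i ! k, bs i ! k) \<in> \<alpha> i))
       \<and> t \<in> clo ar ops (\<Sum>i<n. ms i)
       \<and> (\<forall>s. (\<exists>i<n - 1. \<not> s i) \<longrightarrow>
              (t (comm_args n as bs s (as (n - 1))), t (comm_args n as bs s (bs (n - 1)))) \<in> \<gamma>)
     \<longrightarrow> (t (comm_args n as bs (\<lambda>_. True) (as (n - 1))),
          t (comm_args n as bs (\<lambda>_. True) (bs (n - 1)))) \<in> \<gamma>)"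

definition commutator :: "'a set \<Rightarrow> ('f \<Rightarrow> nat) \<Rightarrow> ('f \<Rightarrow> 'a list \<Rightarrow> 'a) \<Rightarrow> nat \<Rightarrow> (nat \<Rightarrow> 'a rel) \<Rightarrow> 'a rel" where
  "commutator A ar ops n \<alpha> =
     \<Inter> {\<gamma>. congruence A ar ops \<gamma> \<and> centralizes A ar ops n \<alpha> \<gamma>}"

definition cvec :: "nat \<Rightarrow> nat \<Rightarrow> 'a \<Rightarrow> 'a \<Rightarrow> 'a list" where
  "cvec n i a b = map (\<lambda>k. if bit k i then b else a) [0..<2 ^ n]"

inductive_set Delta :: "('f \<Rightarrow> nat) \<Rightarrow> ('f \<Rightarrow> 'a list \<Rightarrow> 'a) \<Rightarrow> nat \<Rightarrow> (nat \<Rightarrow> 'a rel) \<Rightarrow> 'a list set"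
  for ar ops n \<alpha> where
  gen: "i < n \<Longrightarrow> (a, b) \<in> \<alpha> i \<Longrightarrow> cvec n i a b \<in> Delta ar ops n \<alpha>"
| app: "(\<And>j. j < ar f \<Longrightarrow> vs j \<in> Delta ar ops n \<alpha>) \<Longrightarrow>
        map (\<lambda>k. ops f (map (\<lambda>j. vs j ! k) [0..<ar f])) [0..<2 ^ n] \<in> Delta ar ops n \<alpha>"

definition fork :: "nat \<Rightarrow> nat \<Rightarrow> 'a list set \<Rightarrow> 'a rel" where
  "fork m i R = {(x, y). \<exists>c\<in>R. \<exists>d\<in>R. length c = m \<and> length d = m \<and>
       c ! i = x \<and> d ! i = y \<and> (\<forall>k<m. k \<noteq> i \<longrightarrow> c ! k = d ! k)}"

end

theory Submission
  imports Defs
begin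

lemma B1: "(k::nat) < 2^m \<Longrightarrow> m \<le> i \<Longrightarrow> \<not> bit k i"
proof -
  assume "k < 2^m" "m \<le> i"
  then have "k < 2^i" by (meson order_less_le_trans one_le_numeral power_increasing)
  then show ?thesis by (simp add: bit_iff_odd)
qed

lemma B2: "(k::nat) < 2^m \<Longrightarrow> (k = 2^m - 1 \<longleftrightarrow> (\<forall>i<m. bit k i))"
proof
  assume "k = 2^m - 1" then have "k = mask m" by (simp add: mask_eq_exp_minus_1)
  then show "\<forall>i<m. bit k i"
    by (simp add: bit_mask_iff)
next
  assume k: "k < 2^m" and "\<forall>i<m. bit k i"
  then have "k = mask m"
    apply (intro bit_eqI)
    apply (auto simp: bit_mask_iff)
    using B1[OF k] leI by blast
  then show "k = 2^m - 1" by (simp add: mask_eq_exp_minus_1)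
qed

lemma B3: "\<exists>k::nat. k < 2^m \<and> (\<forall>i<m. bit k i = sel i)"
proof (induction m arbitrary: sel)
  case 0 then show ?case by auto
next
  case (Suc m)
  obtain k :: nat where k: "k < 2^m" "\<forall>i<m. bit k i = sel (Suc i)" using Suc[of "sel \<circ> Suc"] by auto
  define k' where "k' = of_bool (sel 0) + 2 * k"
  have "k' < 2^Suc m" using k(1) by (cases "sel 0") (auto simp: k'_def)
  moreover have "\<forall>i<Suc m. bit k' i = sel i"
  proof (intro allI impI)
    fix i assume "i < Suc m"
    then show "bit k' i = sel i" using k(2)
      by (cases i) (auto simp: k'_def bit_0 bit_Suc)
  qed
  ultimately show ?case by blast
qed

lemma B4: "(k::nat) < 2^m \<Longrightarrow> bit (k + 2^m) i = (i = m \<or> bit k i)"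
  by (subst bit_disjunctive_add_iff) (auto simp: bit_exp_iff dest: B1)

lemma B5: "(x::nat) < 2^n \<Longrightarrow> y < 2^n \<Longrightarrow> xor x y < 2^n"
  by (metis take_bit_nat_eq_self_iff take_bit_nat_less_exp take_bit_xor)

lemma clo_comp:
  assumes "t \<in> clo ar ops m" and "\<forall>p<m. g p \<in> clo ar ops M"
  shows "(\<lambda>xs. t (map (\<lambda>p. g p xs) [0..<m])) \<in> clo ar ops M"
  using assms
proof (induction rule: clo.induct)
  case (proj i)
  then show ?case by simp
next
  case (app f ts)
  have "(\<lambda>xs. ops f (map (\<lambda>j. (\<lambda>xs. ts j (map (\<lambda>p. g p xs) [0..<m])) xs) [0..<ar f])) \<in> clo ar ops M"
    by (rule clo.app) (use app in auto)
  then show ?case by simp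
qed

locale MA =
  fixes A :: "'a set" and ar :: "'f \<Rightarrow> nat" and ops :: "'f \<Rightarrow> 'a list \<Rightarrow> 'a"
    and n :: nat and \<alpha> :: "nat \<Rightarrow> 'a rel"
  assumes mal: "malcev A ar ops" and n1: "n \<ge> 1"
    and cong: "\<And>i. i < n \<Longrightarrow> congruence A ar ops (\<alpha> i)"
begin

lemma alg: "is_algebra A ar ops" using mal by (simp add: malcev_def)

lemma ops_A: "length xs = ar f \<Longrightarrow> set xs \<subseteq> A \<Longrightarrow> ops f xs \<in> A"
  using alg by (simp add: is_algebra_def)

lemma eqv: "i < n \<Longrightarrow> equiv A (\<alpha> i)" using cong by (simp add: congruence_def)

lemma alpha_A: "i < n \<Longrightarrow> (x, y) \<in> \<alpha> i \<Longrightarrow> x \<in> A \<and> y \<in> A"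
  using eqv by (auto simp: equiv_def)

lemma alpha_refl: "i < n \<Longrightarrow> x \<in> A \<Longrightarrow> (x, x) \<in> \<alpha> i"
  using eqv by (auto simp: equiv_def refl_on_def)

lemma alpha_sym: "i < n \<Longrightarrow> (x, y) \<in> \<alpha> i \<Longrightarrow> (y, x) \<in> \<alpha> i"
  using eqv by (auto simp: equiv_def sym_def)

lemma cvec_length[simp]: "length (cvec m i a b) = 2 ^ m" by (simp add: cvec_def)
lemma cvec_nth[simp]: "k < 2 ^ m \<Longrightarrow> cvec m i a b ! k = (if bit k i then b else a)"
  by (simp add: cvec_def)

abbreviation "D \<equiv> Delta ar ops n \<alpha>"

lemma D_wf: "v \<in> D \<Longrightarrow> length v = 2 ^ n \<and> set v \<subseteq> A"
proof (induction rule: Delta.induct)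
  case (gen i a b)
  then show ?case using alpha_A[of i a b] by (auto simp: cvec_def)
next
  case (app f vs)
  show ?case
  proof (auto)
    fix k :: nat assume "k < 2 ^ n"
    then show "ops f (map (\<lambda>j. vs j ! k) [0..<ar f]) \<in> A"
      using app by (intro ops_A) (auto simp: subset_iff)
  qed
qed

lemma D_len: "v \<in> D \<Longrightarrow> length v = 2 ^ n" using D_wf by blast
lemma D_A: "v \<in> D \<Longrightarrow> k < 2 ^ n \<Longrightarrow> v ! k \<in> A"
  using D_wf by (metis nth_mem subsetD)

lemma D_term:
  assumes "t \<in> clo ar ops m" and "\<forall>p<m. vs p \<in> D"
  shows "map (\<lambda>k. t (map (\<lambda>p. vs p ! k) [0..<m])) [0..<2^n] \<in> D"
  using assms
proof (induction rule: clo.induct)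
  case (proj i)
  then have "length (vs i) = 2 ^ n" using D_len by blast
  then have "map (\<lambda>k. vs i ! k) [0..<2^n] = vs i" by (metis map_nth)
  then show ?case using proj by simp
next
  case (app f ts)
  let ?w = "\<lambda>j. map (\<lambda>k. ts j (map (\<lambda>p. vs p ! k) [0..<m])) [0..<2^n]"
  have "map (\<lambda>k. ops f (map (\<lambda>j. ?w j ! k) [0..<ar f])) [0..<2^n] \<in> D"
    by (rule Delta.app) (use app in auto)
  moreover have "map (\<lambda>k. ops f (map (\<lambda>j. ?w j ! k) [0..<ar f])) [0..<2^n]
     = map (\<lambda>k. ops f (map (\<lambda>j. ts j (map (\<lambda>p. vs p ! k) [0..<m])) [0..<ar f])) [0..<2^n]"
    by (rule map_cong) auto
  ultimately show ?case by simp
qed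

definition Q where "Q = (SOME q. q \<in> clo ar ops 3 \<and> (\<forall>x\<in>A. \<forall>y\<in>A. q [x, x, y] = y \<and> q [y, x, x] = y))"

lemma Q: "Q \<in> clo ar ops 3 \<and> (\<forall>x\<in>A. \<forall>y\<in>A. Q [x, x, y] = y \<and> Q [y, x, x] = y)"
proof -
  have "\<exists>q. q \<in> clo ar ops 3 \<and> (\<forall>x\<in>A. \<forall>y\<in>A. q [x, x, y] = y \<and> q [y, x, x] = y)"
    using mal by (auto simp: malcev_def)
  then show ?thesis unfolding Q_def by (rule someI_ex)
qed

lemma Q1: "x \<in> A \<Longrightarrow> y \<in> A \<Longrightarrow> Q [x, x, y] = y" using Q by blast
lemma Q2: "x \<in> A \<Longrightarrow> y \<in> A \<Longrightarrow> Q [y, x, x] = y" using Q by blast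

lemma D_Q:
  assumes "c1 \<in> D" "c2 \<in> D" "c3 \<in> D"
  shows "map (\<lambda>k. Q [c1 ! k, c2 ! k, c3 ! k]) [0..<2^n] \<in> D"
proof -
  have "map (\<lambda>k. Q (map (\<lambda>p. [c1, c2, c3] ! p ! k) [0..<3])) [0..<2^n] \<in> D"
    using Q assms by (intro D_term) (auto simp: less_Suc_eq numeral_3_eq_3)
  then show ?thesis by (simp add: numeral_3_eq_3 upt_rec)
qed

lemma D_const: "a \<in> A \<Longrightarrow> replicate (2^n) a \<in> D"
proof -
  assume a: "a \<in> A"
  have "cvec n 0 a a \<in> D" using n1 a alpha_refl by (intro Delta.gen) auto
  moreover have "cvec n 0 a a = replicate (2^n) a"
    by (simp add: cvec_def map_replicate_const)
  ultimately show ?thesis by simp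
qed

lemma D_reindex:
  assumes sig: "\<forall>k<2^n. \<sigma> k < 2^n"
    and gens: "\<And>i a b. i < n \<Longrightarrow> (a, b) \<in> \<alpha> i \<Longrightarrow> map (\<lambda>k. cvec n i a b ! \<sigma> k) [0..<2^n] \<in> D"
    and v: "v \<in> D"
  shows "map (\<lambda>k. v ! \<sigma> k) [0..<2^n] \<in> D"
  using v
proof (induction rule: Delta.induct)
  case (gen i a b)
  then show ?case using gens by blast
next
  case (app f vs)
  let ?w = "\<lambda>j. map (\<lambda>k. vs j ! \<sigma> k) [0..<2^n]"
  have "map (\<lambda>k. ops f (map (\<lambda>j. ?w j ! k) [0..<ar f])) [0..<2^n] \<in> D"
    by (rule Delta.app) (use app in auto)
  moreover have "map (\<lambda>k. ops f (map (\<lambda>j. ?w j ! k) [0..<ar f])) [0..<2^n]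
     = map (\<lambda>k. map (\<lambda>k. ops f (map (\<lambda>j. vs j ! k) [0..<ar f])) [0..<2^n] ! \<sigma> k) [0..<2^n]"
    by (rule map_cong) (auto simp: sig)
  ultimately show ?case by simp
qed

lemma D_xor:
  assumes d: "d < 2^n" and v: "v \<in> D"
  shows "map (\<lambda>k. v ! xor k d) [0..<2^n] \<in> D"
proof (rule D_reindex[OF _ _ v])
  show "\<forall>k<2^n. xor k d < 2^n" using d B5 by blast
next
  fix i a b assume i: "i < n" and ab: "(a, b) \<in> \<alpha> i"
  show "map (\<lambda>k. cvec n i a b ! xor k d) [0..<2^n] \<in> D"
  proof (cases "bit d i")
    case True
    have "map (\<lambda>k. cvec n i a b ! xor k d) [0..<2^n] = cvec n i b a"
      using True d by (intro nth_equalityI) (auto simp: B5 bit_xor_iff)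
    moreover have "cvec n i b a \<in> D" by (rule Delta.gen) (use i alpha_sym ab in auto)
    ultimately show ?thesis by simp
  next
    case False
    have "map (\<lambda>k. cvec n i a b ! xor k d) [0..<2^n] = cvec n i a b"
      using False d by (intro nth_equalityI) (auto simp: B5 bit_xor_iff)
    moreover have "cvec n i a b \<in> D" by (rule Delta.gen) (use i ab in auto)
    ultimately show ?thesis by simp
  qed
qed

lemma N2: "(2::nat)^n = 2 * 2^(n-1)" using n1 by (metis Suc_diff_le diff_Suc_1 power_Suc)

lemma mod_h_lt: "(k::nat) mod 2^(n-1) < 2^n"
proof -
  have "k mod 2^(n-1) < 2^(n-1)" by simp
  then show ?thesis using N2 by linarith
qed

lemma D_double:
  assumes v: "v \<in> D"
  shows "map (\<lambda>k. v ! (k mod 2^(n-1))) [0..<2^n] \<in> D"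
proof (rule D_reindex[OF _ _ v])
  show "\<forall>k<2^n. k mod 2^(n-1) < (2::nat)^n"
    using mod_h_lt by blast
next
  fix i a b assume i: "i < n" and ab: "(a, b) \<in> \<alpha> i"
  show "map (\<lambda>k. cvec n i a b ! (k mod 2^(n-1))) [0..<2^n] \<in> D"
  proof (cases "i < n - 1")
    case True
    have "map (\<lambda>k. cvec n i a b ! (k mod 2^(n-1))) [0..<2^n] = cvec n i a b"
    proof (intro nth_equalityI)
      fix k assume "k < length (map (\<lambda>k. cvec n i a b ! (k mod 2^(n-1))) [0..<2^n])"
      then have k: "k < 2^n" by simp
      have "k mod 2^(n-1) < (2::nat)^n"
        by (rule mod_h_lt)
      then show "map (\<lambda>k. cvec n i a b ! (k mod 2^(n-1))) [0..<2^n] ! k = cvec n i a b ! k"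
        using k True by (simp add: bit_take_bit_iff flip: take_bit_eq_mod)
    qed simp
    moreover have "cvec n i a b \<in> D" by (rule Delta.gen) (use i ab in auto)
    ultimately show ?thesis by simp
  next
    case False
    have "map (\<lambda>k. cvec n i a b ! (k mod 2^(n-1))) [0..<2^n] = cvec n i a a"
    proof (intro nth_equalityI)
      fix k assume "k < length (map (\<lambda>k. cvec n i a b ! (k mod 2^(n-1))) [0..<2^n])"
      then have k: "k < 2^n" by simp
      have "k mod 2^(n-1) < (2::nat)^n"
        by (rule mod_h_lt)
      then show "map (\<lambda>k. cvec n i a b ! (k mod 2^(n-1))) [0..<2^n] ! k = cvec n i a a ! k"
        using k False by (simp add: bit_take_bit_iff flip: take_bit_eq_mod)
    qed simp
    moreover have "cvec n i a a \<in> D" by (rule Delta.gen) (use i alpha_refl alpha_A[OF i ab] in auto)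
    ultimately show ?thesis by simp
  qed
qed


lemma fork_lemma:
  assumes c: "c \<in> D" and d: "d \<in> D" and eq: "\<forall>j<2^n-1. c ! j = d ! j"
  shows "replicate (2^n-1) (c ! (2^n-1)) @ [d ! (2^n-1)] \<in> D"
proof -
  have N: "(2::nat)^n - 1 < 2^n" by simp
  let ?a = "c ! (2^n-1)"
  have aA: "?a \<in> A" using D_A[OF c N] .
  have "map (\<lambda>k. Q [d ! k, c ! k, replicate (2^n) ?a ! k]) [0..<2^n] \<in> D"
    by (rule D_Q[OF d c D_const[OF aA]])
  moreover have "map (\<lambda>k. Q [d ! k, c ! k, replicate (2^n) ?a ! k]) [0..<2^n]
      = replicate (2^n-1) ?a @ [d ! (2^n-1)]"
  proof (intro nth_equalityI)
    fix k assume "k < length (map (\<lambda>k. Q [d ! k, c ! k, replicate (2^n) ?a ! k]) [0..<2^n])"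
    then have k: "k < 2^n" by simp
    show "map (\<lambda>k. Q [d ! k, c ! k, replicate (2^n) ?a ! k]) [0..<2^n] ! k
        = (replicate (2^n-1) ?a @ [d ! (2^n-1)]) ! k"
    proof (cases "k < 2^n - 1")
      case True
      then show ?thesis using k eq Q1[OF D_A[OF c k] aA] by (simp add: nth_append)
    next
      case False
      then have "k = 2^n - 1" using k by simp
      then show ?thesis using Q2[OF aA D_A[OF d k]] by (simp add: nth_append)
    qed
  qed simp
  ultimately show ?thesis by simp
qed

lemma half_lemma:
  assumes v: "v \<in> D" and eq: "\<forall>k<2^(n-1)-1. v ! k = v ! (k + 2^(n-1))"
  shows "replicate (2^n-1) (v ! (2^(n-1)-1)) @ [v ! (2^n-1)] \<in> D"
proof -
  let ?h = "(2::nat)^(n-1)"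
  let ?c = "map (\<lambda>k. v ! (k mod ?h)) [0..<2^n]"
  have c: "?c \<in> D" by (rule D_double[OF v])
  have hp: "?h > 0" by simp
  have "\<forall>j<2^n-1. ?c ! j = v ! j"
  proof (intro allI impI)
    fix j :: nat assume j: "j < 2^n - 1"
    have jN: "j < 2^n" using j by linarith
    show "?c ! j = v ! j"
    proof (cases "j < ?h")
      case True then show ?thesis using jN by simp
    next
      case False
      have lt: "j - ?h < ?h - 1" using j N2 False by linarith
      have "j mod ?h = (j - ?h + ?h) mod ?h" using False by simp
      also have "\<dots> = (j - ?h) mod ?h" by (rule mod_add_self2)
      also have "\<dots> = j - ?h" using lt by simp
      finally have "j mod ?h = j - ?h" .
      moreover note lt
      moreover have "?c ! j = v ! (j mod ?h)" using jN by simp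
      moreover have "v ! (j - ?h) = v ! (j - ?h + ?h)" using eq lt by blast
      ultimately show ?thesis using False by simp
    qed
  qed
  moreover have "?c ! (2^n-1) = v ! (?h - 1)"
  proof -
    have "(2::nat)^n - 1 = (?h - 1) + ?h" using N2 hp by linarith
    then have "(2^n - 1) mod ?h = ((?h - 1) + ?h) mod ?h" by simp
    also have "\<dots> = (?h - 1) mod ?h" by (rule mod_add_self2)
    also have "\<dots> = ?h - 1" using hp by simp
    finally have "(2^n - 1) mod ?h = ?h - 1" .
    then show ?thesis by simp
  qed
  ultimately show ?thesis using fork_lemma[OF c v] by simp
qed

lemma eq12:
  assumes a: "a \<in> A" and b: "b \<in> A"
  shows "(a, b) \<in> fork (2^n) (2^n-1) D \<longleftrightarrow> replicate (2^n-1) a @ [b] \<in> D"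
proof
  assume "(a, b) \<in> fork (2^n) (2^n-1) D"
  then obtain c d where c: "c \<in> D" and d: "d \<in> D" and ca: "c ! (2^n-1) = a" and db: "d ! (2^n-1) = b"
    and eq: "\<forall>k<2^n. k \<noteq> 2^n-1 \<longrightarrow> c ! k = d ! k"
    unfolding fork_def by blast
  have "\<forall>j<2^n-1. c ! j = d ! j" using eq by auto
  from fork_lemma[OF c d this] show "replicate (2^n-1) a @ [b] \<in> D" using ca db by simp
next
  assume v: "replicate (2^n-1) a @ [b] \<in> D"
  have N: "(2::nat)^n \<ge> 1" by simp
  show "(a, b) \<in> fork (2^n) (2^n-1) D"
    unfolding fork_def
  proof (clarify, intro bexI conjI)
    show "length (replicate (2^n) a) = 2^n" by simp
    show "length (replicate (2^n-1) a @ [b]) = 2^n" using N by simp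
    show "replicate (2^n) a ! (2^n-1) = a" by simp
    show "(replicate (2^n-1) a @ [b]) ! (2^n-1) = b" by (simp add: nth_append)
    show "\<forall>k<2^n. k \<noteq> 2^n-1 \<longrightarrow> replicate (2^n) a ! k = (replicate (2^n-1) a @ [b]) ! k"
      by (auto simp: nth_append)
  qed (use v D_const[OF a] in auto)
qed

lemma eq23:
  assumes a: "a \<in> A" and b: "b \<in> A"
  shows "replicate (2^n-1) a @ [b] \<in> D \<longleftrightarrow>
     (\<exists>cs. length cs = 2^(n-1) - 1 \<and> set cs \<subseteq> A \<and> cs @ [a] @ cs @ [b] \<in> D)"
proof
  let ?h = "(2::nat)^(n-1)"
  have hp: "?h > 0" by simp
  assume v: "replicate (2^n-1) a @ [b] \<in> D"
  have e: "(2::nat)^n - 1 = (?h-1) + (1 + (?h-1))" using N2 hp by linarith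
  have "replicate (2^n-1) a = replicate (?h-1) a @ replicate 1 a @ replicate (?h-1) a"
    by (simp only: e replicate_add)
  then have "replicate (?h-1) a @ [a] @ replicate (?h-1) a @ [b] \<in> D" using v by simp
  then show "\<exists>cs. length cs = 2^(n-1) - 1 \<and> set cs \<subseteq> A \<and> cs @ [a] @ cs @ [b] \<in> D"
    using a by (intro exI[of _ "replicate (?h-1) a"]) auto
next
  let ?h = "(2::nat)^(n-1)"
  have hp: "?h > 0" by simp
  assume "\<exists>cs. length cs = 2^(n-1) - 1 \<and> set cs \<subseteq> A \<and> cs @ [a] @ cs @ [b] \<in> D"
  then obtain cs where len: "length cs = ?h - 1" and v: "cs @ [a] @ cs @ [b] \<in> D" by blast
  let ?v = "cs @ [a] @ cs @ [b]"
  have vv: "?v = (cs @ [a]) @ (cs @ [b])" by simp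
  have l1: "length (cs @ [a]) = ?h" using len hp by simp
  have "\<forall>k<?h-1. ?v ! k = ?v ! (k + ?h)"
  proof (intro allI impI)
    fix k assume k: "k < ?h - 1"
    have "?v ! (k + ?h) = (cs @ [b]) ! k" unfolding vv using l1 by (simp add: nth_append)
    also have "\<dots> = cs ! k" using k len by (simp add: nth_append)
    also have "\<dots> = ?v ! k" using k len by (simp add: nth_append)
    finally show "?v ! k = ?v ! (k + ?h)" by simp
  qed
  from half_lemma[OF v this]
  have "replicate (2^n-1) (?v ! (?h-1)) @ [?v ! (2^n-1)] \<in> D" .
  moreover have "?v ! (?h-1) = a" using len by (simp add: nth_append)
  moreover have "?v ! (2^n-1) = b"
  proof -
    have idx: "(2::nat)^n - 1 = length (cs @ [a]) + length cs" using N2 hp l1 len by linarith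
    have "?v ! (2^n-1) = ((cs @ [a]) @ (cs @ [b])) ! (length (cs @ [a]) + length cs)"
      by (simp only: idx vv)
    also have "\<dots> = (cs @ [b]) ! length cs" by (rule nth_append_length_plus)
    finally show ?thesis by simp
  qed
  ultimately show "replicate (2^n-1) a @ [b] \<in> D" by simp
qed

definition TT :: "'a \<Rightarrow> 'a \<Rightarrow> 'a list" where "TT x y = replicate (2^n-1) x @ [y]"

lemma TT_len[simp]: "length (TT x y) = 2^n" by (simp add: TT_def)
lemma TT_nth: "k < 2^n \<Longrightarrow> TT x y ! k = (if k = 2^n - 1 then y else x)"
  by (auto simp: TT_def nth_append)

lemma TT_const: "TT x x = replicate (2^n) x"
  by (rule nth_equalityI) (auto simp: TT_nth)

lemma Q_TT:
  assumes "TT x1 y1 \<in> D" "TT x2 y2 \<in> D" "TT x3 y3 \<in> D"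
  shows "TT (Q [x1, x2, x3]) (Q [y1, y2, y3]) \<in> D"
proof -
  have "map (\<lambda>k. Q [TT x1 y1 ! k, TT x2 y2 ! k, TT x3 y3 ! k]) [0..<2^n] \<in> D"
    by (rule D_Q[OF assms])
  moreover have "map (\<lambda>k. Q [TT x1 y1 ! k, TT x2 y2 ! k, TT x3 y3 ! k]) [0..<2^n]
     = TT (Q [x1, x2, x3]) (Q [y1, y2, y3])"
    by (rule nth_equalityI) (auto simp: TT_nth)
  ultimately show ?thesis by simp
qed

definition RR where "RR = {(x, y). x \<in> A \<and> y \<in> A \<and> TT x y \<in> D}"

lemma RR_cong: "congruence A ar ops RR"
  unfolding congruence_def
proof (intro conjI allI impI)
  show "equiv A RR"
  proof (rule equivI)
    show "RR \<subseteq> A \<times> A" by (auto simp: RR_def)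
    show "refl_on A RR" by (auto simp: refl_on_def RR_def TT_const D_const)
    show "sym RR"
    proof (rule symI)
      fix x y assume "(x, y) \<in> RR"
      then have x: "x \<in> A" and y: "y \<in> A" and v: "TT x y \<in> D" by (auto simp: RR_def)
      have "TT (Q [x, x, y]) (Q [x, y, y]) \<in> D"
        using Q_TT[OF _ v, of x x y y] D_const x y by (simp add: TT_const)
      then show "(y, x) \<in> RR" using x y Q1 Q2 by (simp add: RR_def)
    qed
    show "trans RR"
    proof (rule transI)
      fix x y z assume "(x, y) \<in> RR" "(y, z) \<in> RR"
      then have x: "x \<in> A" and y: "y \<in> A" and z: "z \<in> A" and v: "TT x y \<in> D" and w: "TT y z \<in> D"
        by (auto simp: RR_def)
      have "TT (Q [x, y, y]) (Q [y, y, z]) \<in> D"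
        using Q_TT[OF v _ w, of y y] D_const y by (simp add: TT_const)
      then show "(x, z) \<in> RR" using x y z Q1 Q2 by (simp add: RR_def)
    qed
  qed
next
  fix f xs ys
  assume h: "length xs = ar f \<and> length ys = ar f \<and> (\<forall>i<ar f. (xs ! i, ys ! i) \<in> RR)"
  have xA: "set xs \<subseteq> A" and yA: "set ys \<subseteq> A" using h by (auto simp: RR_def in_set_conv_nth)
  have "map (\<lambda>k. ops f (map (\<lambda>j. TT (xs ! j) (ys ! j) ! k) [0..<ar f])) [0..<2^n] \<in> D"
    by (rule Delta.app) (use h in \<open>auto simp: RR_def\<close>)
  moreover have "map (\<lambda>k. ops f (map (\<lambda>j. TT (xs ! j) (ys ! j) ! k) [0..<ar f])) [0..<2^n]
     = TT (ops f xs) (ops f ys)"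
  proof (rule nth_equalityI)
    fix k assume "k < length (map (\<lambda>k. ops f (map (\<lambda>j. TT (xs ! j) (ys ! j) ! k) [0..<ar f])) [0..<2^n])"
    then have k: "k < 2^n" by simp
    show "map (\<lambda>k. ops f (map (\<lambda>j. TT (xs ! j) (ys ! j) ! k) [0..<ar f])) [0..<2^n] ! k = TT (ops f xs) (ops f ys) ! k"
    proof (cases "k = 2^n - 1")
      case True
      then have "map (\<lambda>j. TT (xs ! j) (ys ! j) ! k) [0..<ar f] = ys"
        using k h by (intro nth_equalityI) (auto simp: TT_nth)
      then show ?thesis using k True by (simp add: TT_nth)
    next
      case False
      then have "map (\<lambda>j. TT (xs ! j) (ys ! j) ! k) [0..<ar f] = xs"
        using k h by (intro nth_equalityI) (auto simp: TT_nth)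
      then show ?thesis using k False by (simp add: TT_nth)
    qed
  qed simp
  ultimately show "(ops f xs, ops f ys) \<in> RR"
    using h xA yA ops_A by (simp add: RR_def)
qed

lemma xor_eq_iff: "xor (j::nat) (xor a b) = a \<longleftrightarrow> j = b"
  by (auto simp: bit_eq_iff bit_xor_iff)

lemma correction:
  assumes u: "u \<in> D" and hyp: "\<forall>k<2^(n-1)-1. (u ! k, u ! (k + 2^(n-1))) \<in> RR"
  shows "(u ! (2^(n-1)-1), u ! (2^n-1)) \<in> RR"
proof -
  let ?h = "(2::nat)^(n-1)"
  have hp: "?h > 0" by simp
  define uK where "uK K = map (\<lambda>j. if ?h \<le> j \<and> j < ?h + K then u ! (j - ?h) else u ! j) [0..<2^n]" for K
  have uKD: "K \<le> ?h - 1 \<Longrightarrow> uK K \<in> D" for K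
  proof (induction K)
    case 0
    have "uK 0 = u" using D_len[OF u] by (intro nth_equalityI) (auto simp: uK_def)
    then show ?case using u by simp
  next
    case (Suc K)
    then have IH: "uK K \<in> D" and K: "K < ?h - 1" by auto
    let ?x = "u ! K" and ?y = "u ! (K + ?h)"
    have xy: "TT ?x ?y \<in> D" and xA: "?x \<in> A" using hyp K by (auto simp: RR_def)
    define d where "d = xor (2^n - 1) (K + ?h)"
    have KhN: "K + ?h < 2^n" using K N2 by linarith
    have d: "d < 2^n" unfolding d_def by (rule B5) (use KhN in auto)
    let ?z = "map (\<lambda>j. TT ?x ?y ! xor j d) [0..<2^n]"
    have zD: "?z \<in> D" by (rule D_xor[OF d xy])
    have znth: "j < 2^n \<Longrightarrow> ?z ! j = (if j = K + ?h then ?y else ?x)" for j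
      using B5[OF _ d, of j] by (simp add: TT_nth d_def xor_eq_iff)
    have "map (\<lambda>j. Q [uK K ! j, ?z ! j, replicate (2^n) ?x ! j]) [0..<2^n] \<in> D"
      by (rule D_Q[OF IH zD D_const[OF xA]])
    moreover have "map (\<lambda>j. Q [uK K ! j, ?z ! j, replicate (2^n) ?x ! j]) [0..<2^n] = uK (Suc K)"
    proof (rule nth_equalityI)
      fix j assume "j < length (map (\<lambda>j. Q [uK K ! j, ?z ! j, replicate (2^n) ?x ! j]) [0..<2^n])"
      then have j: "j < 2^n" by simp
      have ujA: "uK K ! j \<in> A" using D_A[OF IH j] .
      show "map (\<lambda>j. Q [uK K ! j, ?z ! j, replicate (2^n) ?x ! j]) [0..<2^n] ! j = uK (Suc K) ! j"
      proof (cases "j = K + ?h")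
        case True
        have yA: "?y \<in> A" using D_A[OF u KhN] .
        have "uK K ! j = ?y" using True j by (simp add: uK_def)
        then show ?thesis using True j znth Q1[OF yA xA] by (simp add: uK_def)
      next
        case False
        then show ?thesis using j znth Q2[OF xA ujA] by (auto simp: uK_def)
      qed
    qed (simp add: uK_def)
    ultimately show ?case by simp
  qed
  have U: "uK (?h - 1) \<in> D" by (rule uKD) simp
  have "\<forall>k<?h-1. uK (?h - 1) ! k = uK (?h - 1) ! (k + ?h)"
  proof (intro allI impI)
    fix k assume k: "k < ?h - 1"
    have k1: "k + ?h < 2^n" "k < 2^n" "k + ?h < ?h + (?h - 1)" "k < ?h" using k N2 by linarith+
    have "uK (?h - 1) ! k = u ! k" using k1 by (simp add: uK_def)
    moreover have "uK (?h - 1) ! (k + ?h) = u ! k" using k1(1) k1(3) by (simp add: uK_def)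
    ultimately show "uK (?h - 1) ! k = uK (?h - 1) ! (k + ?h)" by simp
  qed
  from half_lemma[OF U this]
  have "TT (uK (?h - 1) ! (?h - 1)) (uK (?h - 1) ! (2^n - 1)) \<in> D" by (simp add: TT_def)
  moreover have uKn: "j < 2^n \<Longrightarrow> uK K ! j = (if ?h \<le> j \<and> j < ?h + K then u ! (j - ?h) else u ! j)" for j K
    by (simp add: uK_def)
  have f1: "?h - 1 < 2^n" "\<not> ?h \<le> ?h - 1" "(2::nat)^n - 1 < 2^n" "\<not> (2::nat)^n - 1 < ?h + (?h - 1)"
    using N2 hp by linarith+
  have "uK (?h - 1) ! (?h - 1) = u ! (?h - 1)" using f1 uKn[of "?h - 1" "?h - 1"] by simp
  moreover have "uK (?h - 1) ! (2^n - 1) = u ! (2^n - 1)" using f1 uKn[of "2^n - 1" "?h - 1"] by simp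
  moreover have "u ! (?h - 1) \<in> A" "u ! (2^n - 1) \<in> A" using D_A[OF u] f1 by auto
  ultimately show ?thesis by (simp add: RR_def)
qed

lemma comm_args_cong: "(\<forall>i<n-1. s i = s' i) \<Longrightarrow> comm_args n as bs s lst = comm_args n as bs s' lst"
  unfolding comm_args_def by (intro arg_cong[where f=concat] map_cong) auto

lemma CA:
  assumes "\<forall>i<n-1. bit k i = s i"
  shows "comm_args n as bs s (if bit k (n-1) then bs (n-1) else as (n-1))
       = concat (map (\<lambda>i. if bit k i then bs i else as i) [0..<n])"
  unfolding comm_args_def
proof (intro arg_cong[where f=concat] map_cong refl)
  fix i assume "i \<in> set [0..<n]"
  then have i: "i < n" by simp
  show "(if i < n - 1 then if s i then bs i else as i else if bit k (n - 1) then bs (n - 1) else as (n - 1)) =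
         (if bit k i then bs i else as i)"
  proof (cases "i < n - 1")
    case True then show ?thesis using assms by auto
  next
    case False then have "i = n - 1" using i by linarith
    then show ?thesis by simp
  qed
qed

lemma RR_central: "centralizes A ar ops n \<alpha> RR"
  unfolding centralizes_def
proof (intro allI impI, elim conjE)
  fix ms as bs t
  assume H: "\<forall>i<n. length (as i) = ms i \<and> length (bs i) = ms i \<and> as i \<noteq> bs i \<and>
              set (as i) \<subseteq> A \<and> set (bs i) \<subseteq> A \<and> (\<forall>k<ms i. (as i ! k, bs i ! k) \<in> \<alpha> i)"
    and tc: "t \<in> clo ar ops (\<Sum>i<n. ms i)"
    and hyp: "\<forall>s. (\<exists>i<n - 1. \<not> s i) \<longrightarrow>
              (t (comm_args n as bs s (as (n - 1))), t (comm_args n as bs s (bs (n - 1)))) \<in> RR"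
  let ?h = "(2::nat)^(n-1)"
  have hp: "?h > 0" by simp
  define G where "G = concat (map (\<lambda>i. map (\<lambda>j. cvec n i (as i ! j) (bs i ! j)) [0..<ms i]) [0..<n])"
  have lenG: "length G = (\<Sum>i<n. ms i)"
    by (simp add: G_def length_concat comp_def sum_list_sum_nth atLeast0LessThan)
  have GD: "\<forall>p<(\<Sum>i<n. ms i). G ! p \<in> D"
  proof (intro allI impI)
    fix p assume "p < (\<Sum>i<n. ms i)"
    then have "G ! p \<in> set G" using lenG by simp
    then obtain i j where i: "i < n" and j: "j < ms i" and g: "G ! p = cvec n i (as i ! j) (bs i ! j)"
      unfolding G_def by auto
    show "G ! p \<in> D" unfolding g by (rule Delta.gen) (use i j H in auto)
  qed
  define u where "u = map (\<lambda>k. t (map (\<lambda>p. G ! p ! k) [0..<(\<Sum>i<n. ms i)])) [0..<2^n]"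
  have uD: "u \<in> D" unfolding u_def by (rule D_term[OF tc GD])
  have sel: "map (\<lambda>p. G ! p ! k) [0..<(\<Sum>i<n. ms i)] = concat (map (\<lambda>i. if bit k i then bs i else as i) [0..<n])"
    if k: "k < 2^n" for k
  proof -
    have "map (\<lambda>p. G ! p ! k) [0..<(\<Sum>i<n. ms i)] = map (\<lambda>g. g ! k) (map (nth G) [0..<length G])"
      by (simp add: lenG)
    also have "\<dots> = map (\<lambda>g. g ! k) G" by (simp only: map_nth)
    also have "\<dots> = concat (map (\<lambda>i. if bit k i then bs i else as i) [0..<n])"
      unfolding G_def map_concat
    proof (intro arg_cong[where f=concat])
      show "map (map (\<lambda>g. g ! k)) (map (\<lambda>i. map (\<lambda>j. cvec n i (as i ! j) (bs i ! j)) [0..<ms i]) [0..<n])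
          = map (\<lambda>i. if bit k i then bs i else as i) [0..<n]"
      proof -
        have inner: "map (\<lambda>j. cvec n i (as i ! j) (bs i ! j) ! k) [0..<ms i] = (if bit k i then bs i else as i)"
          if "i < n" for i
          using H k that by (intro nth_equalityI) auto
        show ?thesis unfolding map_map comp_def by (rule map_cong[OF refl]) (simp add: inner)
      qed
    qed
    finally show ?thesis .
  qed
  have unth: "u ! k = t (concat (map (\<lambda>i. if bit k i then bs i else as i) [0..<n]))" if "k < 2^n" for k
    using sel[OF that] that by (simp add: u_def)
  have ulow: "u ! k = t (comm_args n as bs (bit k) (as (n-1)))" if k: "k < ?h" for k
  proof -
    have nb: "\<not> bit k (n-1)" using B1[of k "n-1" "n-1"] k by simp
    have kN: "k < 2^n" using k N2 by linarith
    have "comm_args n as bs (bit k) (if bit k (n-1) then bs (n-1) else as (n-1))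
       = concat (map (\<lambda>i. if bit k i then bs i else as i) [0..<n])" by (rule CA) simp
    then show ?thesis using nb unth[OF kN] by simp
  qed
  have uhigh: "u ! (k + ?h) = t (comm_args n as bs (bit k) (bs (n-1)))" if k: "k < ?h" for k
  proof -
    have b4: "bit (k + ?h) i = (i = n - 1 \<or> bit k i)" for i using B4[OF k] .
    have kN: "k + ?h < 2^n" using k N2 by linarith
    have "comm_args n as bs (bit k) (if bit (k + ?h) (n-1) then bs (n-1) else as (n-1))
       = concat (map (\<lambda>i. if bit (k + ?h) i then bs i else as i) [0..<n])" by (rule CA) (use b4 in auto)
    then show ?thesis using b4 unth[OF kN] by simp
  qed
  have "\<forall>k<?h-1. (u ! k, u ! (k + ?h)) \<in> RR"
  proof (intro allI impI)
    fix k assume k: "k < ?h - 1"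
    then have kh: "k < ?h" by linarith
    have "\<not> (\<forall>i<n-1. bit k i)" using B2[OF kh] k by simp
    then have "\<exists>i<n-1. \<not> bit k i" by blast
    then show "(u ! k, u ! (k + ?h)) \<in> RR" using hyp ulow[OF kh] uhigh[OF kh] by simp
  qed
  from correction[OF uD this] have c: "(u ! (?h - 1), u ! (2^n - 1)) \<in> RR" .
  have h1: "?h - 1 < ?h" using hp by simp
  have allb: "\<forall>i<n-1. (\<lambda>_. True) i = bit (?h - 1) i" using B2[of "?h - 1" "n-1"] hp by simp
  have e: "(2::nat)^n - 1 = (?h - 1) + ?h" using N2 hp by linarith
  show "(t (comm_args n as bs (\<lambda>_. True) (as (n - 1))), t (comm_args n as bs (\<lambda>_. True) (bs (n - 1)))) \<in> RR"
    using c unfolding e ulow[OF h1] uhigh[OF h1] comm_args_cong[OF allb] .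
qed

lemma comm_RR: "(a, b) \<in> commutator A ar ops n \<alpha> \<Longrightarrow> (a, b) \<in> RR"
  unfolding commutator_def using RR_cong RR_central by blast

definition gval :: "nat \<times> 'a \<times> 'a \<Rightarrow> nat \<Rightarrow> 'a" where
  "gval g k = (if bit k (fst g) then snd (snd g) else fst (snd g))"

definition gok :: "(nat \<Rightarrow> nat \<times> 'a \<times> 'a) \<Rightarrow> bool" where
  "gok gs \<longleftrightarrow> (\<forall>p. fst (gs p) < n \<and> (fst (snd (gs p)), snd (snd (gs p))) \<in> \<alpha> (fst (gs p)))"

lemma D_flat:
  assumes "v \<in> D"
  shows "\<exists>m gs t. gok gs \<and> t \<in> clo ar ops m \<and> v = map (\<lambda>k. t (map (\<lambda>p. gval (gs p) k) [0..<m])) [0..<2^n]"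
  using assms
proof (induction rule: Delta.induct)
  case (gen i a b)
  have "gok (\<lambda>_. (i, a, b))" using gen by (simp add: gok_def)
  moreover have "(\<lambda>xs. xs ! 0) \<in> clo ar ops 1" by (rule clo.proj) simp
  moreover have "cvec n i a b = map (\<lambda>k. (\<lambda>xs. xs ! 0) (map (\<lambda>p. gval ((\<lambda>_. (i, a, b)) p) k) [0..<1])) [0..<2^n]"
    by (simp add: cvec_def gval_def)
  ultimately show ?case by blast
next
  case (app f vs)
  have "\<forall>j\<in>{..<ar f}. \<exists>x. gok (fst (snd x)) \<and> snd (snd x) \<in> clo ar ops (fst x) \<and>
      vs j = map (\<lambda>k. snd (snd x) (map (\<lambda>p. gval (fst (snd x) p) k) [0..<fst x])) [0..<2^n]"
    using app.IH by fastforce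
  then obtain F where F: "\<forall>j\<in>{..<ar f}. gok (fst (snd (F j))) \<and> snd (snd (F j)) \<in> clo ar ops (fst (F j)) \<and>
      vs j = map (\<lambda>k. snd (snd (F j)) (map (\<lambda>p. gval (fst (snd (F j)) p) k) [0..<fst (F j)])) [0..<2^n]"
    by (rule bchoice[THEN exE]) blast
  define M where "M j = fst (F j)" for j
  define GS where "GS j = fst (snd (F j))" for j
  define TS where "TS j = snd (snd (F j))" for j
  define K where "K = (\<Sum>j<ar f. M j) + 1"
  have MK: "j < ar f \<Longrightarrow> M j < K" for j
    unfolding K_def using member_le_sum[of j "{..<ar f}" M] by simp
  have Kp: "K > 0" by (simp add: K_def)
  obtain a0 where a0: "a0 \<in> A" using alg by (auto simp: is_algebra_def)
  define GS' where "GS' p = (if p div K < ar f then GS (p div K) (p mod K) else (0, a0, a0))" for p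
  define T' where "T' = (\<lambda>xs. ops f (map (\<lambda>j. (\<lambda>xs. TS j (map (\<lambda>p. xs ! (j * K + p)) [0..<M j])) xs) [0..<ar f]))"
  have idx: "j < ar f \<Longrightarrow> p < M j \<Longrightarrow> j * K + p < ar f * K" for j p
  proof -
    assume j: "j < ar f" and p: "p < M j"
    have "j * K + p < j * K + K" using p MK[OF j] by simp
    also have "\<dots> = Suc j * K" by simp
    also have "\<dots> \<le> ar f * K" using j by (intro mult_right_mono) auto
    finally show ?thesis .
  qed
  have "gok GS'" using F a0 alpha_refl n1 by (auto simp: gok_def GS'_def GS_def)
  moreover have "T' \<in> clo ar ops (ar f * K)"
    unfolding T'_def
  proof (rule clo.app)
    fix j assume j: "j < ar f"
    show "(\<lambda>xs. TS j (map (\<lambda>p. xs ! (j * K + p)) [0..<M j])) \<in> clo ar ops (ar f * K)"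
    proof (rule clo_comp[where t="TS j" and m="M j" and g="\<lambda>p xs. xs ! (j * K + p)" and M="ar f * K"])
      show "TS j \<in> clo ar ops (M j)" using F j by (simp add: TS_def M_def)
      show "\<forall>p<M j. (\<lambda>xs. xs ! (j * K + p)) \<in> clo ar ops (ar f * K)"
        using idx[OF j] by (auto intro: clo.proj)
    qed
  qed
  moreover have "map (\<lambda>k. ops f (map (\<lambda>j. vs j ! k) [0..<ar f])) [0..<2^n]
      = map (\<lambda>k. T' (map (\<lambda>p. gval (GS' p) k) [0..<ar f * K])) [0..<2^n]"
  proof (rule map_cong[OF refl])
    fix k assume "k \<in> set [0..<2^n]"
    then have k: "k < 2^n" by simp
    show "ops f (map (\<lambda>j. vs j ! k) [0..<ar f]) = T' (map (\<lambda>p. gval (GS' p) k) [0..<ar f * K])"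
      unfolding T'_def
    proof (intro arg_cong[where f="ops f"] map_cong refl)
      fix j assume "j \<in> set [0..<ar f]"
      then have j: "j < ar f" by simp
      have meq: "map (\<lambda>p. map (\<lambda>p. gval (GS' p) k) [0..<ar f * K] ! (j * K + p)) [0..<M j]
          = map (\<lambda>p. gval (GS j p) k) [0..<M j]"
      proof (rule map_cong[OF refl])
        fix p assume "p \<in> set [0..<M j]"
        then have p: "p < M j" by simp
        have pK: "p < K" using p MK[OF j] by simp
        have "(j * K + p) div K = j" "(j * K + p) mod K = p" using pK Kp by auto
        then show "map (\<lambda>p. gval (GS' p) k) [0..<ar f * K] ! (j * K + p) = gval (GS j p) k"
          using idx[OF j p] j by (simp add: GS'_def)
      qed
      then show "vs j ! k = TS j (map (\<lambda>p. map (\<lambda>p. gval (GS' p) k) [0..<ar f * K] ! (j * K + p)) [0..<M j])"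
        unfolding meq using F j k by (simp add: TS_def GS_def M_def)
    qed
  qed
  ultimately show ?case by blast
qed

lemma D_inv:
  assumes i0: "i0 < n" and triv: "\<forall>p r. (p, r) \<in> \<alpha> i0 \<longrightarrow> p = r" and v: "v \<in> D"
  shows "j < 2^n \<Longrightarrow> j' < 2^n \<Longrightarrow> (\<forall>i<n. i \<noteq> i0 \<longrightarrow> bit j i = bit j' i) \<Longrightarrow> v ! j = v ! j'"
  using v
proof (induction arbitrary: j j' rule: Delta.induct)
  case (gen i a b)
  show ?case
  proof (cases "i = i0")
    case True
    then have "a = b" using triv gen by blast
    then show ?thesis using gen by simp
  next
    case False
    then have "bit j i = bit j' i" using gen by blast
    then show ?thesis using gen(3,4) by simp
  qed
next
  case (app f vs)
  have meq: "map (\<lambda>ja. vs ja ! j) [0..<ar f] = map (\<lambda>ja. vs ja ! j') [0..<ar f]"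
  proof (rule map_cong[OF refl])
    fix x assume "x \<in> set [0..<ar f]"
    then have x: "x < ar f" by simp
    show "vs x ! j = vs x ! j'" by (rule app.IH[OF x]) (use app.prems in auto)
  qed
  have "map (\<lambda>k. ops f (map (\<lambda>ja. vs ja ! k) [0..<ar f])) [0..<2^n] ! j = ops f (map (\<lambda>ja. vs ja ! j) [0..<ar f])"
    "map (\<lambda>k. ops f (map (\<lambda>ja. vs ja ! k) [0..<ar f])) [0..<2^n] ! j' = ops f (map (\<lambda>ja. vs ja ! j') [0..<ar f])"
    using app.prems by simp_all
  then show ?case unfolding meq by simp
qed

end

lemma concat_nth_unif:
  "(\<forall>i<m. length (F i) = L) \<Longrightarrow> i < m \<Longrightarrow> j < L \<Longrightarrow> concat (map F [0..<m]) ! (i * L + j) = F i ! j"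
proof (induction m)
  case 0 then show ?case by simp
next
  case (Suc m)
  have len: "length (concat (map F [0..<m])) = m * L"
    using Suc.prems(1) by (induction m) auto
  show ?case
  proof (cases "i < m")
    case True
    have "i * L + j < m * L"
    proof -
      have "i * L + j < i * L + L" using Suc.prems by simp
      also have "\<dots> = Suc i * L" by simp
      also have "\<dots> \<le> m * L" using True by (intro mult_right_mono) auto
      finally show ?thesis .
    qed
    then show ?thesis using Suc True len by (simp add: nth_append)
  next
    case False
    then have "i = m" using Suc.prems by simp
    then show ?thesis using len by (simp add: nth_append)
  qed
qed

lemma spec4: "\<forall>a b c d. P a b c d \<Longrightarrow> P a b c d" by blast

context MA begin

lemma TT_comm:
  assumes a: "a \<in> A" and b: "b \<in> A" and v: "TT a b \<in> D"
  shows "(a, b) \<in> commutator A ar ops n \<alpha>"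
  unfolding commutator_def
proof (rule InterI, clarify)
  fix \<gamma> assume gc: "congruence A ar ops \<gamma>" and gz: "centralizes A ar ops n \<alpha> \<gamma>"
  have grefl: "x \<in> A \<Longrightarrow> (x, x) \<in> \<gamma>" for x
    using gc by (auto simp: congruence_def equiv_def refl_on_def)
  have N1: "(2::nat)^n - 1 < 2^n" by simp
  have allN: "\<forall>i<n. bit ((2::nat)^n - 1) i" using B2[OF N1] by simp
  have TTk: "k < 2^n \<Longrightarrow> TT a b ! k = (if \<forall>i<n. bit k i then b else a)" for k
    using B2[of k n] by (simp add: TT_nth)
  show "(a, b) \<in> \<gamma>"
  proof (cases "\<forall>i<n. \<exists>p r. (p, r) \<in> \<alpha> i \<and> p \<noteq> r")
    case False
    then obtain i0 where i0: "i0 < n" and triv: "\<forall>p r. (p, r) \<in> \<alpha> i0 \<longrightarrow> p = r" by blast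
    obtain j' :: nat where j': "j' < 2^n" "\<forall>i<n. bit j' i = (i \<noteq> i0)" using B3[of n "\<lambda>i. i \<noteq> i0"] by blast
    have "TT a b ! (2^n-1) = TT a b ! j'"
      by (rule D_inv[OF i0 triv v N1 j'(1)]) (use allN j' in auto)
    moreover have "\<not> (\<forall>i<n. bit j' i)" using j' i0 by auto
    ultimately have "b = a" using j'(1) TTk[OF N1] TTk[OF j'(1)] allN by simp
    then show ?thesis using grefl a by simp
  next
    case True
    then have "\<forall>i\<in>{..<n}. \<exists>x. (fst x, snd x) \<in> \<alpha> i \<and> fst x \<noteq> snd x" by auto
    then obtain PR where PR: "\<forall>i\<in>{..<n}. (fst (PR i), snd (PR i)) \<in> \<alpha> i \<and> fst (PR i) \<noteq> snd (PR i)"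
      by (rule bchoice[THEN exE]) blast
    obtain m gs t where gok: "gok gs" and tc: "t \<in> clo ar ops m"
      and vrep: "TT a b = map (\<lambda>k. t (map (\<lambda>p. gval (gs p) k) [0..<m])) [0..<2^n]"
      using D_flat[OF v] by blast
    have gsn: "fst (gs p) < n" and gsa: "(fst (snd (gs p)), snd (snd (gs p))) \<in> \<alpha> (fst (gs p))" for p
      using gok by (auto simp: gok_def)
    define as where "as i = map (\<lambda>p. if fst (gs p) = i then fst (snd (gs p)) else a) [0..<m] @ [fst (PR i)]" for i
    define bs where "bs i = map (\<lambda>p. if fst (gs p) = i then snd (snd (gs p)) else a) [0..<m] @ [snd (PR i)]" for i
    define ms where "ms (i::nat) = m + 1" for i
    define t' where "t' = (\<lambda>xs. t (map (\<lambda>p. (\<lambda>xs. xs ! (fst (gs p) * (m+1) + p)) xs) [0..<m]))"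
    have sum: "(\<Sum>i<n. ms i) = n * (m+1)" by (simp add: ms_def)
    have idx: "fst (gs p) * (m+1) + p < n * (m+1)" if "p < m" for p
    proof -
      have "fst (gs p) * (m+1) + p < fst (gs p) * (m+1) + (m+1)" using that by simp
      also have "\<dots> = Suc (fst (gs p)) * (m+1)" by simp
      also have "\<dots> \<le> n * (m+1)" using gsn[of p] by (intro mult_right_mono) auto
      finally show ?thesis .
    qed
    have t'c: "t' \<in> clo ar ops (\<Sum>i<n. ms i)" unfolding sum t'_def
    proof (rule clo_comp[OF tc], intro allI impI)
      fix p assume "p < m"
      then show "(\<lambda>xs. xs ! (fst (gs p) * (m+1) + p)) \<in> clo ar ops (n * (m+1))"
        by (intro clo.proj idx)
    qed
    have vnth: "k < 2^n \<Longrightarrow> TT a b ! k = t (map (\<lambda>p. gval (gs p) k) [0..<m])" for k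
      using arg_cong[OF vrep, of "\<lambda>l. l ! k"] by simp
    have lens: "length (as i) = m + 1" "length (bs i) = m + 1" for i by (simp_all add: as_def bs_def)
    have EVAL: "t' (comm_args n as bs s (if e then bs (n-1) else as (n-1))) = TT a b ! k"
      if kb: "\<forall>i<n. bit k i = (if i < n-1 then s i else e)" and k: "k < 2^n" for k s e
    proof -
      have ca: "comm_args n as bs s (if e then bs (n-1) else as (n-1))
          = concat (map (\<lambda>i. if bit k i then bs i else as i) [0..<n])"
        unfolding comm_args_def
      proof (intro arg_cong[where f=concat] map_cong refl)
        fix i assume "i \<in> set [0..<n]"
        then have i: "i < n" by simp
        show "(if i < n - 1 then if s i then bs i else as i else if e then bs (n - 1) else as (n - 1)) =
              (if bit k i then bs i else as i)"
        proof (cases "i < n - 1")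
          case True then show ?thesis using kb i by auto
        next
          case False then have "i = n - 1" using i by linarith
          then show ?thesis using kb i by auto
        qed
      qed
      have inner: "concat (map (\<lambda>i. if bit k i then bs i else as i) [0..<n]) ! (fst (gs p) * (m+1) + p)
          = gval (gs p) k" if p: "p < m" for p
      proof -
        have "concat (map (\<lambda>i. if bit k i then bs i else as i) [0..<n]) ! (fst (gs p) * (m+1) + p)
            = (if bit k (fst (gs p)) then bs (fst (gs p)) else as (fst (gs p))) ! p"
          by (rule concat_nth_unif) (use lens gsn p in auto)
        then show ?thesis using p by (simp add: as_def bs_def gval_def nth_append)
      qed
      have "t' (comm_args n as bs s (if e then bs (n-1) else as (n-1)))
          = t (map (\<lambda>p. concat (map (\<lambda>i. if bit k i then bs i else as i) [0..<n]) ! (fst (gs p) * (m+1) + p)) [0..<m])"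
        unfolding ca t'_def by simp
      also have "\<dots> = t (map (\<lambda>p. gval (gs p) k) [0..<m])"
      proof (intro arg_cong[where f=t] map_cong refl)
        fix p assume "p \<in> set [0..<m]"
        then show "concat (map (\<lambda>i. if bit k i then bs i else as i) [0..<n]) ! (fst (gs p) * (m+1) + p)
            = gval (gs p) k" by (intro inner) simp
      qed
      also have "\<dots> = TT a b ! k" using vnth[OF k] by simp
      finally show ?thesis .
    qed
    have VAL: "t' (comm_args n as bs s (if e then bs (n-1) else as (n-1))) = (if (\<forall>i<n-1. s i) \<and> e then b else a)"
      for s e
    proof -
      obtain k :: nat where k: "k < 2^n" "\<forall>i<n. bit k i = (if i < n-1 then s i else e)"
        using B3[of n "\<lambda>i. if i < n-1 then s i else e"] by blast
      have "(\<forall>i<n. bit k i) \<longleftrightarrow> (\<forall>i<n-1. s i) \<and> e"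
      proof
        assume "\<forall>i<n. bit k i"
        then show "(\<forall>i<n-1. s i) \<and> e"
        proof (intro conjI allI impI)
          fix i assume "\<forall>i<n. bit k i" and i: "i < n - 1"
          then show "s i" using k(2) by (metis less_imp_diff_less add_lessD1 diff_less_mono le_add_diff_inverse n1 less_diff_conv)
        next
          assume "\<forall>i<n. bit k i"
          moreover have "n - 1 < n" using n1 by simp
          ultimately show e using k(2) by auto
        qed
      next
        assume "(\<forall>i<n-1. s i) \<and> e"
        then show "\<forall>i<n. bit k i" using k(2) by auto
      qed
      then show ?thesis using EVAL[OF k(2) k(1)] TTk[OF k(1)] by simp
    qed
    have H1: "\<forall>i<n. length (as i) = ms i \<and> length (bs i) = ms i \<and> as i \<noteq> bs i \<and>
              set (as i) \<subseteq> A \<and> set (bs i) \<subseteq> A \<and> (\<forall>k<ms i. (as i ! k, bs i ! k) \<in> \<alpha> i)"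
    proof (intro allI impI)
      fix i assume i: "i < n"
      have c1: "length (as i) = ms i" "length (bs i) = ms i" using lens by (simp_all add: ms_def)
      have c2: "as i \<noteq> bs i"
      proof
        assume "as i = bs i"
        then have "last (as i) = last (bs i)" by simp
        then show False using PR i by (simp add: as_def bs_def)
      qed
      have pA: "fst (PR i) \<in> A" "snd (PR i) \<in> A" using PR i alpha_A by blast+
      have gA: "fst (snd (gs p)) \<in> A \<and> snd (snd (gs p)) \<in> A" for p using alpha_A[OF gsn gsa] .
      have c3: "set (as i) \<subseteq> A" using pA gA a by (auto simp: as_def)
      have c4: "set (bs i) \<subseteq> A" using pA gA a by (auto simp: bs_def)
      have c5: "\<forall>k<ms i. (as i ! k, bs i ! k) \<in> \<alpha> i"
      proof (intro allI impI)
        fix k assume "k < ms i"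
        then have k: "k < m + 1" by (simp add: ms_def)
        show "(as i ! k, bs i ! k) \<in> \<alpha> i"
        proof (cases "k < m")
          case True
          then show ?thesis using gsa[of k] alpha_refl[OF i a]
            by (auto simp: as_def bs_def nth_append)
        next
          case False
          then have "k = m" using k by simp
          then show ?thesis using PR i by (simp add: as_def bs_def nth_append)
        qed
      qed
      show "length (as i) = ms i \<and> length (bs i) = ms i \<and> as i \<noteq> bs i \<and>
              set (as i) \<subseteq> A \<and> set (bs i) \<subseteq> A \<and> (\<forall>k<ms i. (as i ! k, bs i ! k) \<in> \<alpha> i)"
        using c1 c2 c3 c4 c5 by blast
    qed
    have H3: "\<forall>s. (\<exists>i<n - 1. \<not> s i) \<longrightarrow>
              (t' (comm_args n as bs s (as (n - 1))), t' (comm_args n as bs s (bs (n - 1)))) \<in> \<gamma>"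
    proof (intro allI impI)
      fix s :: "nat \<Rightarrow> bool" assume "\<exists>i<n - 1. \<not> s i"
      then have "t' (comm_args n as bs s (as (n - 1))) = a" "t' (comm_args n as bs s (bs (n - 1))) = a"
        using VAL[of s False] VAL[of s True] by auto
      then show "(t' (comm_args n as bs s (as (n - 1))), t' (comm_args n as bs s (bs (n - 1)))) \<in> \<gamma>"
        using grefl a by simp
    qed
    have "(t' (comm_args n as bs (\<lambda>_. True) (as (n - 1))), t' (comm_args n as bs (\<lambda>_. True) (bs (n - 1)))) \<in> \<gamma>"
    proof -
      have C: "\<forall>ms as bs t. (\<forall>i<n. length (as i) = ms i \<and> length (bs i) = ms i \<and> as i \<noteq> bs i \<and>
              set (as i) \<subseteq> A \<and> set (bs i) \<subseteq> A \<and>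
              (\<forall>k<ms i. (as i ! k, bs i ! k) \<in> \<alpha> i))
       \<and> t \<in> clo ar ops (\<Sum>i<n. ms i)
       \<and> (\<forall>s. (\<exists>i<n - 1. \<not> s i) \<longrightarrow>
              (t (comm_args n as bs s (as (n - 1))), t (comm_args n as bs s (bs (n - 1)))) \<in> \<gamma>)
     \<longrightarrow> (t (comm_args n as bs (\<lambda>_. True) (as (n - 1))),
          t (comm_args n as bs (\<lambda>_. True) (bs (n - 1)))) \<in> \<gamma>" using gz unfolding centralizes_def .
      show ?thesis
        by (rule C[rule_format, where ms=ms and as=as and bs=bs and t=t'], intro conjI, rule H1, rule t'c, rule H3)
    qed
    moreover have "t' (comm_args n as bs (\<lambda>_. True) (as (n - 1))) = a"
      "t' (comm_args n as bs (\<lambda>_. True) (bs (n - 1))) = b"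
      using VAL[of "\<lambda>_. True" False] VAL[of "\<lambda>_. True" True] by auto
    ultimately show ?thesis by simp
  qed
qed

end

theorem mainTheorem7:
  fixes A :: "'a set" and ar :: "'f \<Rightarrow> nat" and ops :: "'f \<Rightarrow> 'a list \<Rightarrow> 'a"
    and n :: nat and \<alpha> :: "nat \<Rightarrow> 'a rel" and a b :: 'a
  assumes "malcev A ar ops"
    and "n \<ge> 1"
    and "\<And>i. i < n \<Longrightarrow> congruence A ar ops (\<alpha> i)"
    and "a \<in> A" and "b \<in> A"
  shows "((a, b) \<in> fork (2 ^ n) (2 ^ n - 1) (Delta ar ops n \<alpha>)
            \<longleftrightarrow> replicate (2 ^ n - 1) a @ [b] \<in> Delta ar ops n \<alpha>)
       \<and> (replicate (2 ^ n - 1) a @ [b] \<in> Delta ar ops n \<alpha>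
            \<longleftrightarrow> (\<exists>cs. length cs = 2 ^ (n - 1) - 1 \<and> set cs \<subseteq> A \<and>
                    cs @ [a] @ cs @ [b] \<in> Delta ar ops n \<alpha>))
       \<and> ((\<exists>cs. length cs = 2 ^ (n - 1) - 1 \<and> set cs \<subseteq> A \<and>
                    cs @ [a] @ cs @ [b] \<in> Delta ar ops n \<alpha>)
            \<longleftrightarrow> (a, b) \<in> commutator A ar ops n \<alpha>)"
proof -
  interpret M: MA A ar ops n \<alpha> using assms by unfold_locales auto
  have r12: "((a, b) \<in> fork (2 ^ n) (2 ^ n - 1) (Delta ar ops n \<alpha>)
            \<longleftrightarrow> replicate (2 ^ n - 1) a @ [b] \<in> Delta ar ops n \<alpha>)"
    using M.eq12[OF assms(4,5)] .
  have r23: "(replicate (2 ^ n - 1) a @ [b] \<in> Delta ar ops n \<alpha>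
            \<longleftrightarrow> (\<exists>cs. length cs = 2 ^ (n - 1) - 1 \<and> set cs \<subseteq> A \<and>
                    cs @ [a] @ cs @ [b] \<in> Delta ar ops n \<alpha>))"
    using M.eq23[OF assms(4,5)] .
  have r24: "replicate (2 ^ n - 1) a @ [b] \<in> Delta ar ops n \<alpha> \<longleftrightarrow> (a, b) \<in> commutator A ar ops n \<alpha>"
  proof
    assume "replicate (2 ^ n - 1) a @ [b] \<in> Delta ar ops n \<alpha>"
    then show "(a, b) \<in> commutator A ar ops n \<alpha>"
      using M.TT_comm[OF assms(4,5)] by (simp add: M.TT_def)
  next
    assume "(a, b) \<in> commutator A ar ops n \<alpha>"
    then have "(a, b) \<in> M.RR" by (rule M.comm_RR)
    then show "replicate (2 ^ n - 1) a @ [b] \<in> Delta ar ops n \<alpha>" by (simp add: M.RR_def M.TT_def)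
  qed
  show ?thesis using r12 r23 r24 by blast
qed

end
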